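(* Let $\mathbb{H}$ be a reproducing kernel Hilbert space with inner product $\langle\cdot,\cdot\rangle$ and feature map $\phi$, and let $(X,A,Y)$ be jointly distributed with $Y=\langle\phi(X),y\rangle$ and $A=\langle\phi(X),a\rangle$ for some nonzero $y,a\in\mathbb{H}$, with $\operatorname{Var}(Y),\operatorname{Var}(A)>0$. Let $\Sigma:=\operatorname{Cov}(\phi(X),\phi(X))$ be the covariance operator. Then for every (possibly randomized) representation $Z=g(X)$ with $\operatorname{Var}\mathbb{E}[Y\mid Z]=\operatorname{Var}(Y)$, $$\operatorname{Var}\mathbb{E}[A\mid Z]\ge \frac{\langle a,\Sigma y\rangle^2}{\langle y,\Sigma y\rangle}=\operatorname{Var}(A)\cdot\rho_{YA}^2,$$ where $\rho_{YA}$ is the correlation coefficient of $Y$ and $A$.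
   Context: A (possibly randomized) representation is $Z=g(X,S)$ for a measurable $g$ and auxiliary randomness $S$ independent of $(X,A,Y)$. $\phi(X)$ is assumed to have finite second moment in $\mathbb{H}$. *)

theory Defs
  imports "HOL-Probability.Probability"
begin

definition rv_cov :: "'o measure \<Rightarrow> ('o \<Rightarrow> real) \<Rightarrow> ('o \<Rightarrow> real) \<Rightarrow> real" where
  "rv_cov M U V = (\<integral>\<omega>. (U \<omega> - (\<integral>\<omega>'. U \<omega>' \<partial>M)) * (V \<omega> - (\<integral>\<omega>'. V \<omega>' \<partial>M)) \<partial>M)"

definition rv_var :: "'o measure \<Rightarrow> ('o \<Rightarrow> real) \<Rightarrow> real" where
  "rv_var M U = (\<integral>\<omega>. (U \<omega> - (\<integral>\<omega>'. U \<omega>' \<partial>M))\<^sup>2 \<partial>M)"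

definition rv_corr :: "'o measure \<Rightarrow> ('o \<Rightarrow> real) \<Rightarrow> ('o \<Rightarrow> real) \<Rightarrow> real" where
  "rv_corr M U V = rv_cov M U V / sqrt (rv_var M U * rv_var M V)"

definition cov_op :: "'o measure \<Rightarrow> ('o \<Rightarrow> 'h::real_inner) \<Rightarrow> ('h \<Rightarrow> 'h)" where
  "cov_op M Phi = (THE T. \<forall>u v. u \<bullet> T v = rv_cov M (\<lambda>\<omega>. Phi \<omega> \<bullet> u) (\<lambda>\<omega>. Phi \<omega> \<bullet> v))"

definition cond_exp_given :: "'o measure \<Rightarrow> ('o \<Rightarrow> 'z) \<Rightarrow> 'z measure \<Rightarrow> ('o \<Rightarrow> real) \<Rightarrow> ('o \<Rightarrow> real)" where
  "cond_exp_given M Z MZ f = real_cond_exp M (vimage_algebra (space M) Z MZ) f"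

end

theory Submission
  imports Defs
begin

lemma parallelogram_law:
  fixes x y :: "'h::real_inner"
  shows "(norm (x - y))\<^sup>2 = 2 * (norm x)\<^sup>2 + 2 * (norm y)\<^sup>2 - 4 * (norm ((x + y) /\<^sub>R 2))\<^sup>2"
  by (simp add: power2_norm_eq_inner inner_simps algebra_simps)

lemma riesz_repr:
  fixes f :: "'h::{real_inner,complete_space} \<Rightarrow> real"
  assumes lin: "linear f" and bnd: "\<And>u. \<bar>f u\<bar> \<le> C * norm u"
  shows "\<exists>w. \<forall>u. f u = u \<bullet> w"
proof (cases "\<forall>u. f u = 0")
  case True then show ?thesis by (intro exI[of _ 0]) simp
next
  case False
  then obtain u0 where u0: "f u0 \<noteq> 0" by blast
  define S where "S = {s. f s = 1}"
  have fsc: "f (c *\<^sub>R x) = c * f x" for c x using lin by (simp add: linear_scale)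
  have fadd: "f (x + z) = f x + f z" for x z using lin by (simp add: linear_add)
  have fdiff: "f (x - z) = f x - f z" for x z using lin by (simp add: linear_diff)
  have e: "(u0 /\<^sub>R f u0) \<in> S" using u0 by (simp add: S_def fsc)
  define d where "d = Inf ((\<lambda>s. (norm s)\<^sup>2) ` S)"
  have bdd: "bdd_below ((\<lambda>s. (norm s)\<^sup>2) ` S)" by (rule bdd_belowI[of _ 0]) auto
  have dle: "d \<le> (norm s)\<^sup>2" if "s \<in> S" for s
    unfolding d_def by (rule cInf_lower) (use that bdd in auto)
  have "\<exists>s\<in>S. (norm s)\<^sup>2 < d + 1 / (real n + 1)" for n
  proof -
    have "Inf ((\<lambda>s. (norm s)\<^sup>2) ` S) < d + 1 / (real n + 1)" unfolding d_def by simp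
    from cInf_lessD[OF _ this] e show ?thesis by auto
  qed
  then obtain w where wS: "\<And>n. w n \<in> S" and wn: "\<And>n. (norm (w n))\<^sup>2 < d + 1 / (real n + 1)"
    by metis
  have mid: "(w n + w m) /\<^sub>R 2 \<in> S" for n m
    using wS[of n] wS[of m] by (simp add: S_def fsc fadd)
  have est: "(norm (w n - w m))\<^sup>2 \<le> 2 / (real n + 1) + 2 / (real m + 1)" for n m
  proof -
    have "(norm (w n - w m))\<^sup>2 = 2 * (norm (w n))\<^sup>2 + 2 * (norm (w m))\<^sup>2 - 4 * (norm ((w n + w m) /\<^sub>R 2))\<^sup>2"
      by (rule parallelogram_law)
    also have "\<dots> \<le> 2 * (d + 1 / (real n + 1)) + 2 * (d + 1 / (real m + 1)) - 4 * d"
    proof -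
      have A: "(norm (w n))\<^sup>2 < d + 1 / (real n + 1)" "(norm (w m))\<^sup>2 < d + 1 / (real m + 1)"
        "d \<le> (norm ((w n + w m) /\<^sub>R 2))\<^sup>2" using wn[of n] wn[of m] dle[OF mid[of n m]] by auto
      show ?thesis
        using A by (smt (verit))
    qed
    finally show ?thesis by simp
  qed
  have "Cauchy w"
  proof (rule CauchyI)
    fix r :: real assume r: "r > 0"
    obtain N :: nat where N: "4 / r\<^sup>2 < real N" using reals_Archimedean2 by blast
    have "norm (w m - w n) < r" if "m \<ge> N" "n \<ge> N" for m n
    proof -
      have r2: "r\<^sup>2 > 0" using r by simp
      have "2 / (real m + 1) \<le> 2 / (real N + 1)" "2 / (real n + 1) \<le> 2 / (real N + 1)"
        using that by (auto intro!: divide_left_mono)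
      moreover have "4 / (real N + 1) < r\<^sup>2"
      proof -
        have "4 < r\<^sup>2 * real N" using N r2 by (simp add: field_simps)
        then have "4 < r\<^sup>2 * (real N + 1)" using r2 by (simp add: algebra_simps)
          (smt (verit) \<open>4 < r\<^sup>2 * real N\<close> r2)
        then show ?thesis by (simp add: field_simps)
      qed
      ultimately have "(norm (w m - w n))\<^sup>2 < r\<^sup>2" using est[of m n] by linarith
      then show ?thesis using r by (simp add: power_less_imp_less_base)
    qed
    then show "\<exists>M. \<forall>m\<ge>M. \<forall>n\<ge>M. norm (w m - w n) < r" by blast
  qed
  then obtain w0 where lim: "w \<longlonglongrightarrow> w0" using Cauchy_convergent convergent_def by blast
  have "(\<lambda>n. f (w n)) \<longlonglongrightarrow> f w0"
  proof -
    have "(\<lambda>n. w n - w0) \<longlonglongrightarrow> 0" using lim by (simp add: LIM_zero)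
    then have "(\<lambda>n. norm (w n - w0)) \<longlonglongrightarrow> 0" using tendsto_norm_zero by blast
    then have "(\<lambda>n. C * norm (w n - w0)) \<longlonglongrightarrow> 0" using tendsto_mult_right_zero by blast
    moreover have "norm (f (w n) - f w0) \<le> C * norm (w n - w0)" for n
      using bnd[of "w n - w0"] by (simp add: fdiff)
    then have ev: "eventually (\<lambda>n. norm (f (w n) - f w0) \<le> C * norm (w n - w0)) sequentially"
      by (intro always_eventually) blast
    ultimately have "(\<lambda>n. f (w n) - f w0) \<longlonglongrightarrow> 0"
      by (intro Lim_null_comparison[OF ev])
    then show ?thesis by (simp add: LIM_zero_iff)
  qed
  moreover have "f (w n) = 1" for n using wS[of n] by (simp add: S_def)
  ultimately have "(\<lambda>n. 1) \<longlonglongrightarrow> f w0" by simp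
  then have fw0: "f w0 = 1" using LIMSEQ_unique tendsto_const by blast
  have "(\<lambda>n. (norm (w n))\<^sup>2) \<longlonglongrightarrow> (norm w0)\<^sup>2"
    by (intro tendsto_intros lim)
  moreover have "(\<lambda>n. d + 1 / (real n + 1)) \<longlonglongrightarrow> d + 0"
  proof -
    have "(\<lambda>n. 1 / (real n + 1)) \<longlonglongrightarrow> 0"
      using LIMSEQ_inverse_real_of_nat_add[of 0] by (simp add: inverse_eq_divide add.commute)
    then show ?thesis by (intro tendsto_intros)
  qed
  moreover have "\<exists>N. \<forall>n\<ge>N. (norm (w n))\<^sup>2 \<le> d + 1 / (real n + 1)"
    using wn less_imp_le by blast
  ultimately have nw0: "(norm w0)\<^sup>2 \<le> d"
    using LIMSEQ_le by fastforce
  have orth: "w0 \<bullet> k = 0" if "f k = 0" for k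
  proof (rule ccontr)
    define b where "b = w0 \<bullet> k"
    define c where "c = k \<bullet> k"
    assume "w0 \<bullet> k \<noteq> 0"
    then have b0: "b \<noteq> 0" by (simp add: b_def)
    have c0: "c \<ge> 0" by (simp add: c_def)
    define t where "t = - b / (c + 1)"
    have inS: "w0 + t *\<^sub>R k \<in> S" using fw0 that by (simp add: S_def fadd fsc)
    then have "(norm w0)\<^sup>2 \<le> (norm (w0 + t *\<^sub>R k))\<^sup>2" using dle[OF inS] nw0 by linarith
    also have "\<dots> = (norm w0)\<^sup>2 + 2 * t * b + t\<^sup>2 * c"
      unfolding power2_norm_eq_inner b_def c_def by (simp add: inner_simps inner_commute algebra_simps power2_eq_square)
    finally have "0 \<le> 2 * t * b + t\<^sup>2 * c" by simp
    also have "2 * t * b + t\<^sup>2 * c = b\<^sup>2 * (- c - 2) / (c + 1)\<^sup>2"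
    proof -
      have cne: "c + 1 \<noteq> 0" using c0 by linarith
      show ?thesis unfolding t_def using cne
        by (simp add: divide_simps power2_eq_square) (simp add: algebra_simps)
    qed
    also have "\<dots> < 0"
      using b0 c0 by (intro divide_neg_pos mult_pos_neg) auto
    finally show False by simp
  qed
  have w00: "w0 \<bullet> w0 \<noteq> 0" using fw0 lin by (auto simp: linear_0)
  show ?thesis
  proof (intro exI allI)
    fix u
    have "f (u - f u *\<^sub>R w0) = 0" by (simp add: fdiff fsc fw0)
    then have "w0 \<bullet> (u - f u *\<^sub>R w0) = 0" by (rule orth)
    then have "w0 \<bullet> u = f u * (w0 \<bullet> w0)" by (simp add: inner_simps)
    then show "f u = u \<bullet> (w0 /\<^sub>R (w0 \<bullet> w0))"
      using w00 by (simp add: inner_commute)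
  qed
qed

definition L2 :: "'a measure \<Rightarrow> ('a \<Rightarrow> real) \<Rightarrow> bool" where
  "L2 M f \<longleftrightarrow> f \<in> borel_measurable M \<and> integrable M (\<lambda>x. (f x)\<^sup>2)"

lemma abs_mult_le_sq: "\<bar>a * b\<bar> \<le> a\<^sup>2 + (b::real)\<^sup>2"
proof -
  have "0 \<le> (\<bar>a\<bar> - \<bar>b\<bar>)\<^sup>2" by simp
  also have "(\<bar>a\<bar> - \<bar>b\<bar>)\<^sup>2 = a\<^sup>2 + b\<^sup>2 - 2 * \<bar>a * b\<bar>"
    by (simp add: power2_eq_square algebra_simps abs_mult)
  finally have "2 * \<bar>a * b\<bar> \<le> a\<^sup>2 + b\<^sup>2" by simp
  moreover have "\<bar>a * b\<bar> \<ge> 0" by simp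
  ultimately show ?thesis by linarith
qed

lemma L2_mult: assumes "L2 M f" "L2 M g" shows "integrable M (\<lambda>x. f x * g x)"
proof (rule Bochner_Integration.integrable_bound[where f="\<lambda>x. (f x)\<^sup>2 + (g x)\<^sup>2"])
  show "integrable M (\<lambda>x. (f x)\<^sup>2 + (g x)\<^sup>2)" using assms unfolding L2_def by auto
  show "(\<lambda>x. f x * g x) \<in> borel_measurable M" using assms unfolding L2_def by auto
  show "AE x in M. norm (f x * g x) \<le> norm ((f x)\<^sup>2 + (g x)\<^sup>2)"
  proof (intro AE_I2)
    fix x
    have "\<bar>f x * g x\<bar> \<le> (f x)\<^sup>2 + (g x)\<^sup>2" by (rule abs_mult_le_sq)
    also have "\<dots> = \<bar>(f x)\<^sup>2 + (g x)\<^sup>2\<bar>" by simp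
    finally show "norm (f x * g x) \<le> norm ((f x)\<^sup>2 + (g x)\<^sup>2)" by simp
  qed
qed

lemma (in finite_measure) L2_int: "L2 M f \<Longrightarrow> integrable M f"
  unfolding L2_def by (rule square_integrable_imp_integrable) auto

lemma (in finite_measure) L2_const: "L2 M (\<lambda>x. c)"
  unfolding L2_def by simp

lemma L2_lin: assumes "L2 M f" "L2 M g" shows "L2 M (\<lambda>x. a * f x + b * g x)"
proof -
  have "(\<lambda>x. (a * f x + b * g x)\<^sup>2) = (\<lambda>x. a\<^sup>2 * (f x)\<^sup>2 + b\<^sup>2 * (g x)\<^sup>2 + (2 * a * b) * (f x * g x))"
    by (simp add: power2_eq_square algebra_simps)
  moreover have "integrable M \<dots>"
  proof -
    have "integrable M (\<lambda>x. (f x)\<^sup>2)" "integrable M (\<lambda>x. (g x)\<^sup>2)" using assms unfolding L2_def by auto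
    then show ?thesis using L2_mult[OF assms]
      by (intro Bochner_Integration.integrable_add integrable_mult_right)
  qed
  moreover have "(\<lambda>x. a * f x + b * g x) \<in> borel_measurable M"
  proof -
    have [measurable]: "f \<in> borel_measurable M" "g \<in> borel_measurable M" using assms unfolding L2_def by auto
    show ?thesis by measurable
  qed
  ultimately show ?thesis unfolding L2_def by simp
qed

lemma L2_cmult: "L2 M f \<Longrightarrow> L2 M (\<lambda>x. a * f x)"
  using L2_lin[of M f f a 0] by simp

lemma L2_diff: "L2 M f \<Longrightarrow> L2 M g \<Longrightarrow> L2 M (\<lambda>x. f x - g x)"
  using L2_lin[of M f g 1 "-1"] by simp

lemma L2_add: "L2 M f \<Longrightarrow> L2 M g \<Longrightarrow> L2 M (\<lambda>x. f x + g x)"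
  using L2_lin[of M f g 1 1] by simp

lemma (in prob_space) rv_cov_expand:
  assumes "L2 M U" "L2 M V"
  shows "rv_cov M U V = (\<integral>x. U x * V x \<partial>M) - (\<integral>x. U x \<partial>M) * (\<integral>x. V x \<partial>M)"
proof -
  define a where "a = (\<integral>x. U x \<partial>M)"
  define b where "b = (\<integral>x. V x \<partial>M)"
  have iU: "integrable M U" and iV: "integrable M V" using assms L2_int by auto
  have iUV: "integrable M (\<lambda>x. U x * V x)" using L2_mult[OF assms] .
  have "rv_cov M U V = (\<integral>x. U x * V x - b * U x - a * V x + a * b \<partial>M)"
    unfolding rv_cov_def a_def[symmetric] b_def[symmetric] by (rule Bochner_Integration.integral_cong) (auto simp: algebra_simps)
  also have "\<dots> = (\<integral>x. U x * V x \<partial>M) - b * a - a * b + a * b"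
    using iU iV iUV by (simp add: a_def b_def prob_space)
  finally show ?thesis by (simp add: a_def b_def)
qed

lemma rv_var_cov: "rv_var M U = rv_cov M U U"
  unfolding rv_var_def rv_cov_def by (simp add: power2_eq_square)

lemma rv_cov_sym: "rv_cov M U V = rv_cov M V U"
  unfolding rv_cov_def by (simp add: mult.commute)

lemma (in prob_space) rv_cov_lin:
  assumes "L2 M U" "L2 M V" "L2 M W"
  shows "rv_cov M (\<lambda>x. a * U x + b * V x) W = a * rv_cov M U W + b * rv_cov M V W"
proof -
  have iU: "integrable M U" and iV: "integrable M V" using assms L2_int by auto
  have i1: "integrable M (\<lambda>x. U x * W x)" "integrable M (\<lambda>x. V x * W x)" using L2_mult assms by auto
  have e1: "(\<integral>x. (a * U x + b * V x) * W x \<partial>M) = a * (\<integral>x. U x * W x \<partial>M) + b * (\<integral>x. V x * W x \<partial>M)"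
    using i1 by (simp add: algebra_simps)
  have e2: "(\<integral>x. a * U x + b * V x \<partial>M) = a * (\<integral>x. U x \<partial>M) + b * (\<integral>x. V x \<partial>M)"
    using iU iV by simp
  show ?thesis
  proof -
    have c1: "rv_cov M (\<lambda>x. a * U x + b * V x) W = (\<integral>x. (a * U x + b * V x) * W x \<partial>M) - (\<integral>x. a * U x + b * V x \<partial>M) * (\<integral>x. W x \<partial>M)"
      by (rule rv_cov_expand[OF L2_lin[OF assms(1,2)] assms(3)])
    have c2: "rv_cov M U W = (\<integral>x. U x * W x \<partial>M) - (\<integral>x. U x \<partial>M) * (\<integral>x. W x \<partial>M)"
      by (rule rv_cov_expand[OF assms(1,3)])
    have c3: "rv_cov M V W = (\<integral>x. V x * W x \<partial>M) - (\<integral>x. V x \<partial>M) * (\<integral>x. W x \<partial>M)"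
      by (rule rv_cov_expand[OF assms(2,3)])
    show ?thesis unfolding c1 c2 c3 e1 e2 by (simp add: algebra_simps)
  qed
qed

lemma rv_var_nonneg: "rv_var M U \<ge> 0"
  unfolding rv_var_def by (rule integral_nonneg_AE) auto

lemma (in prob_space) cs_var:
  assumes "L2 M U" "L2 M V" "rv_var M V > 0"
  shows "(rv_cov M U V)\<^sup>2 / rv_var M V \<le> rv_var M U"
proof -
  define t where "t = rv_cov M U V / rv_var M V"
  have LW: "L2 M (\<lambda>x. 1 * U x + (-t) * V x)" by (rule L2_lin[OF assms(1,2)])
  have "0 \<le> rv_var M (\<lambda>x. 1 * U x + (-t) * V x)" by (rule rv_var_nonneg)
  also have "\<dots> = rv_cov M (\<lambda>x. 1 * U x + (-t) * V x) (\<lambda>x. 1 * U x + (-t) * V x)" by (rule rv_var_cov)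
  also have "\<dots> = rv_cov M U (\<lambda>x. 1 * U x + (-t) * V x) - t * rv_cov M V (\<lambda>x. 1 * U x + (-t) * V x)"
    using rv_cov_lin[OF assms(1,2) LW, of 1 "-t"] by simp
  also have "rv_cov M U (\<lambda>x. 1 * U x + (-t) * V x) = rv_cov M U U - t * rv_cov M U V"
    using rv_cov_lin[OF assms(1,2) assms(1), of 1 "-t"] rv_cov_sym[of M U "\<lambda>x. 1 * U x + (-t) * V x"] rv_cov_sym[of M V U]
    by simp
  also have "rv_cov M V (\<lambda>x. 1 * U x + (-t) * V x) = rv_cov M V U - t * rv_cov M V V"
    using rv_cov_lin[OF assms(1,2) assms(2), of 1 "-t"] rv_cov_sym[of M V "\<lambda>x. 1 * U x + (-t) * V x"] rv_cov_sym[of M U V]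
    by simp
  finally have "0 \<le> rv_var M U - 2 * t * rv_cov M U V + t\<^sup>2 * rv_var M V"
    by (simp add: rv_var_cov[symmetric] rv_cov_sym[of M V U] power2_eq_square algebra_simps)
  also have "\<dots> = rv_var M U - (rv_cov M U V)\<^sup>2 / rv_var M V"
    using assms(3) by (simp add: t_def power2_eq_square field_simps)
  finally show ?thesis by simp
qed

lemma cov_op_char:
  fixes Phi :: "'o \<Rightarrow> 'h::{real_inner,complete_space}"
  assumes P: "prob_space M" and Phim: "Phi \<in> borel_measurable M"
    and N2: "integrable M (\<lambda>\<omega>. (norm (Phi \<omega>))\<^sup>2)"
  shows "u \<bullet> cov_op M Phi v = rv_cov M (\<lambda>\<omega>. Phi \<omega> \<bullet> u) (\<lambda>\<omega>. Phi \<omega> \<bullet> v)"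
proof -
  interpret prob_space M by (rule P)
  define A where "A u = (\<lambda>\<omega>. Phi \<omega> \<bullet> u)" for u
  have Am: "A u \<in> borel_measurable M" for u
  proof -
    have "(\<lambda>x::'h. x \<bullet> u) \<in> borel_measurable borel"
      by (intro borel_measurable_continuous_onI continuous_intros)
    from measurable_compose[OF Phim this] show ?thesis by (simp add: A_def)
  qed
  have Nm: "(\<lambda>\<omega>. norm (Phi \<omega>)) \<in> borel_measurable M" using Phim by measurable
  have N1: "integrable M (\<lambda>\<omega>. norm (Phi \<omega>))"
    by (rule square_integrable_imp_integrable[OF Nm N2])
  have Abnd: "\<bar>A u \<omega>\<bar> \<le> norm u * norm (Phi \<omega>)" for u \<omega>
    unfolding A_def using Cauchy_Schwarz_ineq2[of "Phi \<omega>" u] by (simp add: mult.commute)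
  have AL2: "L2 M (A u)" for u
    unfolding L2_def
  proof
    show "A u \<in> borel_measurable M" by (rule Am)
    show "integrable M (\<lambda>x. (A u x)\<^sup>2)"
    proof (rule Bochner_Integration.integrable_bound[where f="\<lambda>\<omega>. (norm u)\<^sup>2 * (norm (Phi \<omega>))\<^sup>2"])
      show "integrable M (\<lambda>\<omega>. (norm u)\<^sup>2 * (norm (Phi \<omega>))\<^sup>2)" using N2 by simp
      show "(\<lambda>x. (A u x)\<^sup>2) \<in> borel_measurable M" using Am by measurable
      show "AE x in M. norm ((A u x)\<^sup>2) \<le> norm ((norm u)\<^sup>2 * (norm (Phi x))\<^sup>2)"
      proof (intro AE_I2)
        fix x
        have "(A u x)\<^sup>2 = \<bar>A u x\<bar>\<^sup>2" by simp
        also have "\<dots> \<le> (norm u * norm (Phi x))\<^sup>2" by (rule power_mono[OF Abnd]) simp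
        finally show "norm ((A u x)\<^sup>2) \<le> norm ((norm u)\<^sup>2 * (norm (Phi x))\<^sup>2)"
          by (simp add: power_mult_distrib)
      qed
    qed
  qed
  define B where "B u v = rv_cov M (A u) (A v)" for u v
  define K1 where "K1 = (\<integral>\<omega>. norm (Phi \<omega>) \<partial>M)"
  define K2 where "K2 = (\<integral>\<omega>. (norm (Phi \<omega>))\<^sup>2 \<partial>M)"
  have K1: "K1 \<ge> 0" unfolding K1_def by (rule integral_nonneg_AE) auto
  have K2: "K2 \<ge> 0" unfolding K2_def by (rule integral_nonneg_AE) auto
  have EA: "\<bar>\<integral>\<omega>. A u \<omega> \<partial>M\<bar> \<le> norm u * K1" for u
  proof -
    have "\<bar>\<integral>\<omega>. A u \<omega> \<partial>M\<bar> \<le> (\<integral>\<omega>. \<bar>A u \<omega>\<bar> \<partial>M)"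
      using integral_norm_bound[of M "A u"] by simp
    also have "\<dots> \<le> (\<integral>\<omega>. norm u * norm (Phi \<omega>) \<partial>M)"
      using Abnd L2_int[OF AL2] N1 by (intro integral_mono) auto
    also have "\<dots> = norm u * K1" by (simp add: K1_def)
    finally show ?thesis .
  qed
  have EAA: "\<bar>\<integral>\<omega>. A u \<omega> * A v \<omega> \<partial>M\<bar> \<le> norm u * norm v * K2" for u v
  proof -
    have "\<bar>\<integral>\<omega>. A u \<omega> * A v \<omega> \<partial>M\<bar> \<le> (\<integral>\<omega>. \<bar>A u \<omega> * A v \<omega>\<bar> \<partial>M)"
      using integral_norm_bound[of M "\<lambda>\<omega>. A u \<omega> * A v \<omega>"] by simp
    also have "\<dots> \<le> (\<integral>\<omega>. (norm u * norm v) * (norm (Phi \<omega>))\<^sup>2 \<partial>M)"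
    proof (rule integral_mono)
      show "integrable M (\<lambda>\<omega>. \<bar>A u \<omega> * A v \<omega>\<bar>)" using L2_mult[OF AL2 AL2] by simp
      show "integrable M (\<lambda>\<omega>. (norm u * norm v) * (norm (Phi \<omega>))\<^sup>2)" using N2 by simp
      fix \<omega>
      have "\<bar>A u \<omega> * A v \<omega>\<bar> = \<bar>A u \<omega>\<bar> * \<bar>A v \<omega>\<bar>" by (simp add: abs_mult)
      also have "\<dots> \<le> (norm u * norm (Phi \<omega>)) * (norm v * norm (Phi \<omega>))"
        by (intro mult_mono Abnd) auto
      finally show "\<bar>A u \<omega> * A v \<omega>\<bar> \<le> (norm u * norm v) * (norm (Phi \<omega>))\<^sup>2"
        by (simp add: power2_eq_square algebra_simps)
    qed
    also have "\<dots> = norm u * norm v * K2" by (simp add: K2_def)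
    finally show ?thesis .
  qed
  have Bbnd: "\<bar>B u v\<bar> \<le> ((K2 + K1 * K1) * norm v) * norm u" for u v
  proof -
    have "B u v = (\<integral>\<omega>. A u \<omega> * A v \<omega> \<partial>M) - (\<integral>\<omega>. A u \<omega> \<partial>M) * (\<integral>\<omega>. A v \<omega> \<partial>M)"
      unfolding B_def by (rule rv_cov_expand[OF AL2 AL2])
    moreover have "\<bar>(\<integral>\<omega>. A u \<omega> \<partial>M) * (\<integral>\<omega>. A v \<omega> \<partial>M)\<bar> \<le> (norm u * K1) * (norm v * K1)"
      unfolding abs_mult using K1 by (intro mult_mono EA) auto
    ultimately have "\<bar>B u v\<bar> \<le> norm u * norm v * K2 + (norm u * K1) * (norm v * K1)"
      using EAA[of u v] by linarith
    then show ?thesis by (simp add: algebra_simps)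
  qed
  have Alin: "A (c *\<^sub>R u + d *\<^sub>R u') = (\<lambda>\<omega>. c * A u \<omega> + d * A u' \<omega>)" for c d u u'
    by (simp add: A_def inner_simps fun_eq_iff)
  have lin: "linear (\<lambda>u. B u v)" for v
  proof (rule linearI)
    fix u u' :: 'h and c :: real
    have "A (u + u') = (\<lambda>\<omega>. 1 * A u \<omega> + 1 * A u' \<omega>)" using Alin[of 1 u 1 u'] by simp
    then show "B (u + u') v = B u v + B u' v"
      unfolding B_def using rv_cov_lin[OF AL2 AL2 AL2, of 1 u 1 u' v] by simp
    have "A (c *\<^sub>R u) = (\<lambda>\<omega>. c * A u \<omega> + 0 * A u \<omega>)" using Alin[of c u 0 u] by simp
    then show "B (c *\<^sub>R u) v = c *\<^sub>R B u v"
      unfolding B_def using rv_cov_lin[OF AL2 AL2 AL2, of c u 0 u v] by simp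
  qed
  have "\<forall>v. \<exists>w. \<forall>u. B u v = u \<bullet> w"
    using riesz_repr[OF lin Bbnd] by blast
  then obtain T where T: "\<And>u v. B u v = u \<bullet> T v" by metis
  have "cov_op M Phi = T"
    unfolding cov_op_def
  proof (rule the_equality)
    show "\<forall>u v. u \<bullet> T v = rv_cov M (\<lambda>\<omega>. Phi \<omega> \<bullet> u) (\<lambda>\<omega>. Phi \<omega> \<bullet> v)"
      using T unfolding B_def A_def by simp
    fix T' assume T': "\<forall>u v. u \<bullet> T' v = rv_cov M (\<lambda>\<omega>. Phi \<omega> \<bullet> u) (\<lambda>\<omega>. Phi \<omega> \<bullet> v)"
    show "T' = T"
    proof
      fix v
      have "(T' v - T v) \<bullet> (T' v - T v) = 0"
        using T'[rule_format, of "T' v - T v" v] T[of "T' v - T v" v]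
        unfolding B_def A_def by (simp add: inner_diff_left inner_diff_right inner_commute)
      then show "T' v = T v" by simp
    qed
  qed
  then show ?thesis using T[of u v] unfolding B_def A_def by simp
qed

lemma main_ineq:
  assumes P: "prob_space M" and sub: "subalgebra M F" and LY: "L2 M Y" and LA: "L2 M A"
    and eqv: "rv_var M (real_cond_exp M F Y) = rv_var M Y" and pos: "rv_var M Y > 0"
  shows "(rv_cov M A Y)\<^sup>2 / rv_var M Y \<le> rv_var M (real_cond_exp M F A)"
proof -
  interpret prob_space M by (rule P)
  have "finite_measure_subalgebra M F"
    unfolding finite_measure_subalgebra_def finite_measure_subalgebra_axioms_def
    using sub finite_measure_axioms by simp
  then interpret sigma_finite_subalgebra M F by (rule finite_measure_subalgebra_is_sigma_finite)
  have ceL2: "L2 M (real_cond_exp M F U)" if LU: "L2 M U" for U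
    unfolding L2_def
  proof
    show "real_cond_exp M F U \<in> borel_measurable M" by simp
    have iU: "integrable M U" using L2_int[OF LU] .
    have iU2: "integrable M (\<lambda>x. (U x)\<^sup>2)" using LU unfolding L2_def by simp
    have J: "AE x in M. (real_cond_exp M F U x)\<^sup>2 \<le> real_cond_exp M F (\<lambda>x. (U x)\<^sup>2) x"
    proof -
      have cv: "convex_on UNIV (\<lambda>x::real. x\<^sup>2)" using convex_power2 by simp
      have "AE x in M. (\<lambda>x. x\<^sup>2) (real_cond_exp M F U x) \<le> real_cond_exp M F (\<lambda>x. (\<lambda>x. x\<^sup>2) (U x)) x"
        by (rule real_cond_exp_jensens_inequality(2)[where X=U and I=UNIV and q="\<lambda>x. x\<^sup>2"])
          (use iU iU2 cv in auto)
      then show ?thesis by simp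
    qed
    show "integrable M (\<lambda>x. (real_cond_exp M F U x)\<^sup>2)"
    proof (rule Bochner_Integration.integrable_bound[where f="real_cond_exp M F (\<lambda>x. (U x)\<^sup>2)"])
      show "integrable M (real_cond_exp M F (\<lambda>x. (U x)\<^sup>2))" using iU2 by (rule real_cond_exp_int(1))
      show "(\<lambda>x. (real_cond_exp M F U x)\<^sup>2) \<in> borel_measurable M" by measurable
      show "AE x in M. norm ((real_cond_exp M F U x)\<^sup>2) \<le> norm (real_cond_exp M F (\<lambda>x. (U x)\<^sup>2) x)"
        using J by eventually_elim auto
    qed
  qed
  have ceE: "(\<integral>x. real_cond_exp M F U x \<partial>M) = (\<integral>x. U x \<partial>M)" if "L2 M U" for U
    using real_cond_exp_int(2)[OF L2_int[OF that]] .
  have ceP: "(\<integral>x. real_cond_exp M F U x * V x \<partial>M) = (\<integral>x. real_cond_exp M F U x * real_cond_exp M F V x \<partial>M)"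
    if "L2 M U" "L2 M V" for U V
  proof -
    have "V \<in> borel_measurable M" using that(2) unfolding L2_def by simp
    then show ?thesis
      using real_cond_exp_intg(2)[OF L2_mult[OF ceL2[OF that(1)] that(2)]] by simp
  qed
  define Y' where "Y' = real_cond_exp M F Y"
  define A' where "A' = real_cond_exp M F A"
  have LY': "L2 M Y'" "L2 M A'" unfolding Y'_def A'_def using ceL2 LY LA by auto
  have mY: "(\<integral>x. Y' x \<partial>M) = (\<integral>x. Y x \<partial>M)" and mA: "(\<integral>x. A' x \<partial>M) = (\<integral>x. A x \<partial>M)"
    unfolding Y'_def A'_def using ceE LY LA by auto
  have "rv_var M Y' = (\<integral>x. Y' x * Y' x \<partial>M) - (\<integral>x. Y x \<partial>M) * (\<integral>x. Y x \<partial>M)"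
    using rv_cov_expand[OF LY'(1) LY'(1)] mY by (simp add: rv_var_cov)
  moreover have "rv_var M Y = (\<integral>x. Y x * Y x \<partial>M) - (\<integral>x. Y x \<partial>M) * (\<integral>x. Y x \<partial>M)"
    using rv_cov_expand[OF LY LY] by (simp add: rv_var_cov)
  ultimately have YY: "(\<integral>x. Y' x * Y' x \<partial>M) = (\<integral>x. Y x * Y x \<partial>M)" using eqv Y'_def by simp
  have YpY: "(\<integral>x. Y' x * Y x \<partial>M) = (\<integral>x. Y' x * Y' x \<partial>M)"
    unfolding Y'_def using ceP[OF LY LY] .
  have i1: "integrable M (\<lambda>x. Y x * Y x)" "integrable M (\<lambda>x. Y' x * Y x)" "integrable M (\<lambda>x. Y' x * Y' x)"
    using L2_mult LY LY' by auto
  have "(\<integral>x. (Y x - Y' x)\<^sup>2 \<partial>M) = (\<integral>x. Y x * Y x - 2 * (Y' x * Y x) + Y' x * Y' x \<partial>M)"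
    by (rule Bochner_Integration.integral_cong) (auto simp: power2_eq_square algebra_simps)
  also have "\<dots> = (\<integral>x. Y x * Y x \<partial>M) - 2 * (\<integral>x. Y' x * Y x \<partial>M) + (\<integral>x. Y' x * Y' x \<partial>M)"
    using i1 by simp
  also have "\<dots> = 0" using YY YpY by simp
  finally have "(\<integral>x. (Y x - Y' x)\<^sup>2 \<partial>M) = 0" .
  moreover have "integrable M (\<lambda>x. (Y x - Y' x)\<^sup>2)" using L2_diff[OF LY LY'(1)] unfolding L2_def by simp
  moreover note iff = integral_nonneg_eq_0_iff_AE[of M "\<lambda>x. (Y x - Y' x)\<^sup>2"]
  ultimately have "AE x in M. (Y x - Y' x)\<^sup>2 = 0" by simp
  then have aeY: "AE x in M. Y' x * A x = Y x * A x"
    by (rule AE_mp) (intro AE_I2 impI, simp)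
  have mYm: "Y \<in> borel_measurable M" "A \<in> borel_measurable M" "Y' \<in> borel_measurable M"
    using LY LA LY' unfolding L2_def by auto
  have m1: "(\<lambda>x. Y' x * A x) \<in> borel_measurable M" "(\<lambda>x. Y x * A x) \<in> borel_measurable M" using mYm by (auto intro!: borel_measurable_times)
  have "(\<integral>x. A' x * Y' x \<partial>M) = (\<integral>x. Y' x * A' x \<partial>M)" by (simp add: mult.commute)
  also have "\<dots> = (\<integral>x. Y' x * A x \<partial>M)" unfolding Y'_def A'_def using ceP[OF LY LA] by simp
  also have "\<dots> = (\<integral>x. Y x * A x \<partial>M)"
    by (rule integral_cong_AE[OF m1 aeY])
  also have "\<dots> = (\<integral>x. A x * Y x \<partial>M)" by (simp add: mult.commute)
  finally have "rv_cov M A' Y' = rv_cov M A Y"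
    using rv_cov_expand[OF LY'(2) LY'(1)] rv_cov_expand[OF LA LY] mY mA by simp
  moreover have "rv_var M Y' = rv_var M Y" using eqv Y'_def by simp
  ultimately show ?thesis
    using cs_var[OF LY'(2) LY'(1)] pos A'_def by simp
qed

lemma inner_L2:
  fixes Phi :: "'o \<Rightarrow> 'h::real_inner"
  assumes Phim: "Phi \<in> borel_measurable M"
    and N2: "integrable M (\<lambda>\<omega>. (norm (Phi \<omega>))\<^sup>2)"
  shows "L2 M (\<lambda>\<omega>. Phi \<omega> \<bullet> u)"
  unfolding L2_def
proof
  show Am: "(\<lambda>\<omega>. Phi \<omega> \<bullet> u) \<in> borel_measurable M"
  proof -
    have "(\<lambda>x::'h. x \<bullet> u) \<in> borel_measurable borel"
      by (intro borel_measurable_continuous_onI continuous_intros)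
    from measurable_compose[OF Phim this] show ?thesis by simp
  qed
  show "integrable M (\<lambda>x. (Phi x \<bullet> u)\<^sup>2)"
  proof (rule Bochner_Integration.integrable_bound[where f="\<lambda>\<omega>. (norm u)\<^sup>2 * (norm (Phi \<omega>))\<^sup>2"])
    show "integrable M (\<lambda>\<omega>. (norm u)\<^sup>2 * (norm (Phi \<omega>))\<^sup>2)" using N2 by simp
    show "(\<lambda>x. (Phi x \<bullet> u)\<^sup>2) \<in> borel_measurable M" using Am by measurable
    show "AE x in M. norm ((Phi x \<bullet> u)\<^sup>2) \<le> norm ((norm u)\<^sup>2 * (norm (Phi x))\<^sup>2)"
    proof (intro AE_I2)
      fix x
      have Abnd: "\<bar>Phi x \<bullet> u\<bar> \<le> norm u * norm (Phi x)"
        using Cauchy_Schwarz_ineq2[of "Phi x" u] by (simp add: mult.commute)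
      have "(Phi x \<bullet> u)\<^sup>2 = \<bar>Phi x \<bullet> u\<bar>\<^sup>2" by simp
      also have "\<dots> \<le> (norm u * norm (Phi x))\<^sup>2" by (rule power_mono[OF Abnd]) simp
      finally show "norm ((Phi x \<bullet> u)\<^sup>2) \<le> norm ((norm u)\<^sup>2 * (norm (Phi x))\<^sup>2)"
        by (simp add: power_mult_distrib)
    qed
  qed
qed

theorem theorem4:
  fixes M :: "'o measure" and MX :: "'x measure" and MS :: "'s measure" and MZ :: "'z measure"
    and X :: "'o \<Rightarrow> 'x" and S :: "'o \<Rightarrow> 's" and g :: "'x \<times> 's \<Rightarrow> 'z"
    and \<phi> :: "'x \<Rightarrow> 'h::{real_inner, complete_space}" and a y :: 'h
  assumes "prob_space M"
    and "X \<in> M \<rightarrow>\<^sub>M MX" and "S \<in> M \<rightarrow>\<^sub>M MS"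
    and "\<forall>B\<in>sets MX. \<forall>C\<in>sets MS.
         measure M (X -` B \<inter> S -` C \<inter> space M)
           = measure M (X -` B \<inter> space M) * measure M (S -` C \<inter> space M)"
    and "g \<in> MX \<Otimes>\<^sub>M MS \<rightarrow>\<^sub>M MZ"
    and "\<phi> \<in> MX \<rightarrow>\<^sub>M borel"
    and "closure (span (range \<phi>)) = UNIV"
    and "integrable M (\<lambda>\<omega>. (norm (\<phi> (X \<omega>)))\<^sup>2)"
    and "y \<noteq> 0" and "a \<noteq> 0"
    and "rv_var M (\<lambda>\<omega>. \<phi> (X \<omega>) \<bullet> y) > 0"
    and "rv_var M (\<lambda>\<omega>. \<phi> (X \<omega>) \<bullet> a) > 0"
    and "rv_var M (cond_exp_given M (\<lambda>\<omega>. g (X \<omega>, S \<omega>)) MZ (\<lambda>\<omega>. \<phi> (X \<omega>) \<bullet> y))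
         = rv_var M (\<lambda>\<omega>. \<phi> (X \<omega>) \<bullet> y)"
  shows "rv_var M (cond_exp_given M (\<lambda>\<omega>. g (X \<omega>, S \<omega>)) MZ (\<lambda>\<omega>. \<phi> (X \<omega>) \<bullet> a))
           \<ge> (a \<bullet> cov_op M (\<lambda>\<omega>. \<phi> (X \<omega>)) y)\<^sup>2 / (y \<bullet> cov_op M (\<lambda>\<omega>. \<phi> (X \<omega>)) y)
       \<and> (a \<bullet> cov_op M (\<lambda>\<omega>. \<phi> (X \<omega>)) y)\<^sup>2 / (y \<bullet> cov_op M (\<lambda>\<omega>. \<phi> (X \<omega>)) y)
           = rv_var M (\<lambda>\<omega>. \<phi> (X \<omega>) \<bullet> a)
             * (rv_corr M (\<lambda>\<omega>. \<phi> (X \<omega>) \<bullet> y) (\<lambda>\<omega>. \<phi> (X \<omega>) \<bullet> a))\<^sup>2"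
proof -
  note P = assms(1)
  have Phim: "(\<lambda>\<omega>. \<phi> (X \<omega>)) \<in> borel_measurable M"
    by (rule measurable_compose[OF assms(2) assms(6)])
  have Zm: "(\<lambda>\<omega>. g (X \<omega>, S \<omega>)) \<in> M \<rightarrow>\<^sub>M MZ"
    by (rule measurable_compose[OF measurable_Pair[OF assms(2) assms(3)] assms(5)])
  define F where "F = vimage_algebra (space M) (\<lambda>\<omega>. g (X \<omega>, S \<omega>)) MZ"
  have sub: "subalgebra M F"
    unfolding subalgebra_def F_def using sets_image_in_sets[OF refl Zm] by simp
  have ce: "cond_exp_given M (\<lambda>\<omega>. g (X \<omega>, S \<omega>)) MZ f = real_cond_exp M F f" for f
    unfolding cond_exp_given_def F_def ..
  define Yv where "Yv = (\<lambda>\<omega>. \<phi> (X \<omega>) \<bullet> y)"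
  define Av where "Av = (\<lambda>\<omega>. \<phi> (X \<omega>) \<bullet> a)"
  have LY: "L2 M Yv" unfolding Yv_def by (rule inner_L2[OF Phim assms(8)])
  have LA: "L2 M Av" unfolding Av_def by (rule inner_L2[OF Phim assms(8)])
  have c1: "a \<bullet> cov_op M (\<lambda>\<omega>. \<phi> (X \<omega>)) y = rv_cov M Av Yv"
    unfolding Av_def Yv_def by (rule cov_op_char[OF P Phim assms(8)])
  have c2: "y \<bullet> cov_op M (\<lambda>\<omega>. \<phi> (X \<omega>)) y = rv_var M Yv"
    unfolding Yv_def rv_var_cov by (rule cov_op_char[OF P Phim assms(8)])
  have posY: "rv_var M Yv > 0" and posA: "rv_var M Av > 0" using assms(11,12) Yv_def Av_def by auto
  have eqv: "rv_var M (real_cond_exp M F Yv) = rv_var M Yv" using assms(13) unfolding ce Yv_def .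
  have I: "(rv_cov M Av Yv)\<^sup>2 / rv_var M Yv \<le> rv_var M (real_cond_exp M F Av)"
    by (rule main_ineq[OF P sub LY LA eqv posY])
  have II: "(rv_cov M Av Yv)\<^sup>2 / rv_var M Yv = rv_var M Av * (rv_corr M Yv Av)\<^sup>2"
  proof -
    have pp: "rv_var M Yv * rv_var M Av > 0" using posY posA by simp
    have "(rv_corr M Yv Av)\<^sup>2 = (rv_cov M Av Yv)\<^sup>2 / (rv_var M Yv * rv_var M Av)"
      unfolding rv_corr_def using pp by (simp add: power_divide rv_cov_sym[of M Yv Av])
    then show ?thesis using posY posA by (simp add: field_simps)
  qed
  show ?thesis
    unfolding c1 c2 ce using I II unfolding Yv_def Av_def by simp
qed

end
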